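(* Let $m \geq 2$ be an integer and let $p=(p_1,\dots,p_m)$ be a probability distribution on $\{1,\dots,m\}$. Throw balls one at a time independently into $m$ bins, each ball landing in bin $i$ with probability $p_i$. Let $k \geq 1$ be an integer and let $T_k$ be the number of balls thrown until some bin first contains $k$ balls. Define $n^* = \frac{k}{\|p\|_k}$, where $\|p\|_k = \left(\sum_{i=1}^m p_i^k\right)^{1/k}$. Then for every $\delta \in (0,1)$: \[ \Pr\left[T_k \leq \left(\tfrac{\delta}{e}\right) n^*\right] \leq \delta \] and \[ \Pr\left[T_k \leq \max\left\{e^2,\ 2\ln(\tfrac{1}{\delta})\right\} n^*\right] \geq 1-\delta. \]
   Context: Equivalently, $T_k$ is the smallest $n$ such that after $n$ balls the maximum load over all bins is at least $k$. *)

theory Defs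
  imports "HOL-Probability.Probability"
begin

definition load :: "nat stream \<Rightarrow> nat \<Rightarrow> nat \<Rightarrow> nat" where
  "load \<omega> n i = card {j. j < n \<and> \<omega> !! j = i}"

text \<open>T_k: the smallest n such that after n balls some bin contains at least k balls
  (infinity if this never happens).\<close>
definition hit_time :: "nat \<Rightarrow> nat stream \<Rightarrow> enat" where
  "hit_time k \<omega> = (INF n \<in> {n. \<exists>i. k \<le> load \<omega> n i}. enat n)"

abbreviation throws :: "nat pmf \<Rightarrow> nat stream measure" where
  "throws p \<equiv> stream_space (measure_pmf p)"

end

theory Submission
  imports Defs
begin


lemma load_alt: "load \<omega> n i = length (filter ((=) i) (stake n \<omega>))"
  unfolding load_def length_filter_conv_card by (auto intro!: arg_cong[where f=card])

lemma load_0[simp]: "load \<omega> 0 i = 0"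
  by (simp add: load_def)

lemma load_Stream: "load (t ## \<omega>) (Suc n) i = (if t = i then 1 else 0) + load \<omega> n i"
  by (simp add: load_alt)

lemma load_Suc: "load \<omega> (Suc n) i = load \<omega> n i + (if \<omega> !! n = i then 1 else 0)"
  unfolding load_alt stake_Suc by simp

lemma load_mono: "n \<le> n' \<Longrightarrow> load \<omega> n i \<le> load \<omega> n' i"
proof (induction n' rule: dec_induct)
  case (step n')
  then show ?case by (simp add: load_Suc)
qed simp

lemma load_fun: "load \<omega> n = (\<lambda>i. length (filter ((=) i) (stake n \<omega>)))"
  by (rule ext) (simp add: load_alt)

lemma sets_load:
  "{\<omega> \<in> space (throws p). Q (load \<omega> n)} \<in> sets (throws p)"
proof -
  have m: "stake n \<in> measurable (throws p) (count_space UNIV)"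
    using measurable_stake[of n]
    by (simp add: measurable_cong_sets sets_stream_space_cong)
  have "{\<omega> \<in> space (throws p). Q (load \<omega> n)} = stake n -` {xs. Q (\<lambda>i. length (filter ((=) i) xs))} \<inter> space (throws p)"
    by (auto simp: load_fun)
  also have "\<dots> \<in> sets (throws p)"
    using m by (rule measurable_sets) simp
  finally show ?thesis .
qed

lemma prob_space_throws: "prob_space (throws p)"
  by (rule prob_space.prob_space_stream_space) (rule prob_space_measure_pmf)

lemma space_throws[simp]: "space (throws p) = UNIV"
  by (simp add: space_stream_space)

lemma throws_rec:
  assumes "finite A" "set_pmf p \<subseteq> A"
  shows "measure (throws p) {\<omega> \<in> space (throws p). Q (load \<omega> (Suc n))}
       = (\<Sum>t\<in>A. pmf p t * measure (throws p) {\<omega> \<in> space (throws p). Q (\<lambda>i. (if t = i then 1 else 0) + load \<omega> n i)})"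
proof -
  have e: "ennreal (measure (throws p) {\<omega> \<in> space (throws p). Q (load \<omega> (Suc n))})
     = (\<integral>\<^sup>+t. ennreal (measure (throws p) {\<omega> \<in> space (throws p). Q (load (t ## \<omega>) (Suc n))}) \<partial>measure_pmf p)"
    by (rule prob_space.prob_stream_space[OF prob_space_measure_pmf]) (rule sets_load)
  have lf: "load (t ## \<omega>) (Suc n) = (\<lambda>i. (if t = i then 1 else 0) + load \<omega> n i)" for t \<omega>
    by (rule ext) (simp add: load_Stream)
  have "ennreal (measure (throws p) {\<omega> \<in> space (throws p). Q (load \<omega> (Suc n))})
     = (\<Sum>t\<in>A. ennreal (measure (throws p) {\<omega> \<in> space (throws p). Q (\<lambda>i. (if t = i then 1 else 0) + load \<omega> n i)}) * pmf p t)"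
    unfolding e lf using assms by (intro nn_integral_measure_pmf_support) auto
  also have "\<dots> = ennreal (\<Sum>t\<in>A. pmf p t * measure (throws p) {\<omega> \<in> space (throws p). Q (\<lambda>i. (if t = i then 1 else 0) + load \<omega> n i)})"
    by (subst sum_ennreal[symmetric]) (auto simp: ennreal_mult' mult.commute)
  finally show ?thesis
    by (subst (asm) ennreal_inj) (auto intro!: sum_nonneg)
qed

lemma bern:
  fixes x :: real
  assumes "0 \<le> x"
  shows "x ^ Suc j + real (Suc j) * x ^ j \<le> (x + 1) ^ Suc j"
proof (induction j)
  case 0
  then show ?case by simp
next
  case (Suc j)
  have "(x + 1) ^ Suc (Suc j) = (x + 1) * (x + 1) ^ Suc j" by simp
  also have "\<dots> \<ge> (x + 1) * (x ^ Suc j + real (Suc j) * x ^ j)"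
    using Suc assms by (intro mult_left_mono) auto
  finally have "(x + 1) ^ Suc (Suc j) \<ge> (x + 1) * (x ^ Suc j + real (Suc j) * x ^ j)" .
  moreover have "(x + 1) * (x ^ Suc j + real (Suc j) * x ^ j) \<ge> x ^ Suc (Suc j) + real (Suc (Suc j)) * x ^ Suc j"
    using assms by (simp add: algebra_simps)
  ultimately show ?case by linarith
qed

lemma key_step:
  fixes q :: real and N l k :: nat
  assumes "0 \<le> q" "q \<le> 1"
  shows "q * (real N ^ (k - Suc l) / fact (k - Suc l) * q ^ (k - Suc l))
       + (1 - q) * (real N ^ (k - l) / fact (k - l) * q ^ (k - l))
       \<le> real (Suc N) ^ (k - l) / fact (k - l) * q ^ (k - l)"
proof (cases "l < k")
  case False
  then show ?thesis by simp
next
  case True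
  then obtain j where j: "k - l = Suc j" "k - Suc l = j"
    by (metis Suc_diff_Suc)
  have b: "real N ^ Suc j + real (Suc j) * real N ^ j \<le> real (Suc N) ^ Suc j"
    using bern[of "real N" j] by (simp add: add.commute)
  have "q * (real N ^ j / fact j * q ^ j) + (1 - q) * (real N ^ Suc j / fact (Suc j) * q ^ Suc j)
      = (q ^ Suc j / fact (Suc j)) * (real (Suc j) * real N ^ j + (1 - q) * real N ^ Suc j)"
    by (simp add: field_simps fact_Suc del: of_nat_Suc)
  also have "\<dots> \<le> (q ^ Suc j / fact (Suc j)) * (real N ^ Suc j + real (Suc j) * real N ^ j)"
    using assms by (intro mult_left_mono) (auto simp: mult_left_le_one_le)
  also have "\<dots> \<le> (q ^ Suc j / fact (Suc j)) * real (Suc N) ^ Suc j"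
    using b assms by (intro mult_left_mono) auto
  finally show ?thesis unfolding j by (simp add: field_simps)
qed

lemma union_bound:
  assumes A: "finite A" "set_pmf p \<subseteq> A" and k: "1 \<le> k"
  shows "\<forall>L. (\<forall>i. i \<notin> A \<longrightarrow> L i = 0) \<longrightarrow>
     measure (throws p) {\<omega> \<in> space (throws p). \<exists>i. k \<le> L i + load \<omega> N i}
       \<le> (\<Sum>i\<in>A. real N ^ (k - L i) / fact (k - L i) * pmf p i ^ (k - L i))"
proof (induction N)
  case 0
  show ?case
  proof (intro allI impI)
    fix L :: "nat \<Rightarrow> nat" assume L: "\<forall>i. i \<notin> A \<longrightarrow> L i = 0"
    interpret P: prob_space "throws p" by (rule prob_space_throws)
    show "measure (throws p) {\<omega> \<in> space (throws p). \<exists>i. k \<le> L i + load \<omega> 0 i}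
       \<le> (\<Sum>i\<in>A. real 0 ^ (k - L i) / fact (k - L i) * pmf p i ^ (k - L i))"
    proof (cases "\<exists>i. k \<le> L i")
      case True
      then obtain i where i: "k \<le> L i" by auto
      with L k have iA: "i \<in> A" by force
      have "measure (throws p) {\<omega> \<in> space (throws p). \<exists>i. k \<le> L i + load \<omega> 0 i} \<le> 1"
        by (rule P.prob_le_1)
      also have "1 = real 0 ^ (k - L i) / fact (k - L i) * pmf p i ^ (k - L i)"
        using i by simp
      also have "\<dots> \<le> (\<Sum>i\<in>A. real 0 ^ (k - L i) / fact (k - L i) * pmf p i ^ (k - L i))"
        by (rule member_le_sum) (use iA A in auto)
      finally show ?thesis .
    next
      case False
      then have "{\<omega> \<in> space (throws p). \<exists>i. k \<le> L i + load \<omega> 0 i} = {}" by auto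
      then show ?thesis by (auto intro!: sum_nonneg)
    qed
  qed
next
  case (Suc N)
  show ?case
  proof (intro allI impI)
    fix L :: "nat \<Rightarrow> nat" assume L: "\<forall>i. i \<notin> A \<longrightarrow> L i = 0"
    define b where "b = (\<lambda>l i. real N ^ (k - l) / fact (k - l) * pmf p i ^ (k - l))"
    have bnn: "0 \<le> b l i" for l i by (simp add: b_def)
    have "measure (throws p) {\<omega> \<in> space (throws p). \<exists>i. k \<le> L i + load \<omega> (Suc N) i}
      = (\<Sum>t\<in>A. pmf p t * measure (throws p) {\<omega> \<in> space (throws p). \<exists>i. k \<le> L i + ((if t = i then 1 else 0) + load \<omega> N i)})"
      using throws_rec[OF A, of "\<lambda>l. \<exists>i. k \<le> L i + l i"] by simp
    also have "\<dots> = (\<Sum>t\<in>A. pmf p t * measure (throws p) {\<omega> \<in> space (throws p). \<exists>i. k \<le> (L(t := Suc (L t))) i + load \<omega> N i})"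
    proof -
      have eqf: "{\<omega> \<in> space (throws p). \<exists>i. k \<le> L i + ((if t = i then 1 else 0) + load \<omega> N i)}
         = {\<omega> \<in> space (throws p). \<exists>i. k \<le> (L(t := Suc (L t))) i + load \<omega> N i}" for t
        by (intro Collect_cong conj_cong refl ex_cong1) auto
      show ?thesis by (simp only: eqf)
    qed
    also have "\<dots> \<le> (\<Sum>t\<in>A. pmf p t * (\<Sum>i\<in>A. b ((L(t := Suc (L t))) i) i))"
    proof (intro sum_mono mult_left_mono)
      fix t assume "t \<in> A"
      with L have "\<forall>i. i \<notin> A \<longrightarrow> (L(t := Suc (L t))) i = 0" by auto
      then show "measure (throws p) {\<omega> \<in> space (throws p). \<exists>i. k \<le> (L(t := Suc (L t))) i + load \<omega> N i} \<le> (\<Sum>i\<in>A. b ((L(t := Suc (L t))) i) i)"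
        using Suc.IH unfolding b_def by blast
    qed simp
    also have "\<dots> = (\<Sum>i\<in>A. \<Sum>t\<in>A. pmf p t * b ((L(t := Suc (L t))) i) i)"
      unfolding sum_distrib_left by (rule sum.swap)
    also have "\<dots> \<le> (\<Sum>i\<in>A. real (Suc N) ^ (k - L i) / fact (k - L i) * pmf p i ^ (k - L i))"
    proof (rule sum_mono)
      fix i assume iA: "i \<in> A"
      have s1: "(\<Sum>t\<in>A - {i}. pmf p t) = 1 - pmf p i"
        using sum_pmf_eq_1[OF A] sum.remove[OF A(1) iA, of "pmf p"] by simp
      have "(\<Sum>t\<in>A. pmf p t * b ((L(t := Suc (L t))) i) i)
          = pmf p i * b (Suc (L i)) i + (\<Sum>t\<in>A - {i}. pmf p t * b ((L(t := Suc (L t))) i) i)"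
        by (subst sum.remove[OF A(1) iA]) (auto intro!: sum.cong)
      also have "(\<Sum>t\<in>A - {i}. pmf p t * b ((L(t := Suc (L t))) i) i) = (\<Sum>t\<in>A - {i}. pmf p t) * b (L i) i"
        by (simp add: sum_distrib_right)
      finally show "(\<Sum>t\<in>A. pmf p t * b ((L(t := Suc (L t))) i) i)
          \<le> real (Suc N) ^ (k - L i) / fact (k - L i) * pmf p i ^ (k - L i)"
        unfolding s1 b_def using key_step[of "pmf p i" N k "L i"] by (simp add: pmf_le_1)
    qed
    finally show "measure (throws p) {\<omega> \<in> space (throws p). \<exists>i. k \<le> L i + load \<omega> (Suc N) i}
       \<le> (\<Sum>i\<in>A. real (Suc N) ^ (k - L i) / fact (k - L i) * pmf p i ^ (k - L i))" .
  qed
qed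



definition Gs :: "nat \<Rightarrow> real \<Rightarrow> real" where
  "Gs r u = (\<Sum>j<r. u ^ j / fact j)"

lemma Gs_0[simp]: "Gs 0 u = 0" by (simp add: Gs_def)

lemma Gs_Suc: "Gs (Suc r) u = Gs r u + u ^ r / fact r" by (simp add: Gs_def)

lemma Gs_at0: "Gs r 0 = (if r = 0 then 0 else 1)"
  by (induction r) (auto simp: Gs_Suc)

lemma Gs_nonneg: "0 \<le> u \<Longrightarrow> 0 \<le> Gs r u"
  by (simp add: Gs_def sum_nonneg)

lemma Gs_deriv: "(Gs r has_real_derivative Gs (r - 1) u) (at u)"
proof (induction r)
  case 0
  then show ?case by (simp add: Gs_def[abs_def])
next
  case (Suc r)
  have e: "Gs (Suc r) = (\<lambda>u. Gs r u + u ^ r / fact r)" by (rule ext) (simp add: Gs_Suc)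
  have d: "((\<lambda>u. Gs r u + u ^ r / fact r) has_real_derivative Gs (r - 1) u + real r * u ^ (r - 1) / fact r) (at u)"
    by (auto intro!: derivative_eq_intros Suc)
  have "Gs (r - 1) u + real r * u ^ (r - 1) / fact r = Gs r u"
  proof (cases r)
    case 0 then show ?thesis by simp
  next
    case (Suc r') then show ?thesis by (simp add: Gs_Suc fact_Suc del: of_nat_Suc)
  qed
  then show ?case using d unfolding e by simp
qed

lemma Gs_deriv_c: "((\<lambda>y. Gs r (c * y)) has_real_derivative c * Gs (r - 1) (c * y)) (at y)"
proof -
  have "((\<lambda>y. Gs r (c * y)) has_real_derivative Gs (r - 1) (c * y) * c) (at y)"
    by (rule DERIV_chain2[OF Gs_deriv]) (auto intro!: derivative_eq_intros)
  then show ?thesis by (simp add: mult.commute)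
qed

lemma S_deriv:
  "((\<lambda>y. \<Sum>j\<le>N. y ^ j / fact j * c j) has_real_derivative (\<Sum>j<N. y ^ j / fact j * c (Suc j))) (at y)"
proof (induction N)
  case 0
  then show ?case by simp
next
  case (Suc N)
  have e: "(\<lambda>y. \<Sum>j\<le>Suc N. y ^ j / fact j * c j) = (\<lambda>y. (\<Sum>j\<le>N. y ^ j / fact j * c j) + y ^ Suc N / fact (Suc N) * c (Suc N))"
    by (rule ext) simp
  have d2: "((\<lambda>y. y ^ Suc N / fact (Suc N) * c (Suc N)) has_real_derivative y ^ N / fact N * c (Suc N)) (at y)"
  proof -
    have "((\<lambda>y. y ^ Suc N * (c (Suc N) / fact (Suc N))) has_real_derivative real (Suc N) * y ^ N * (c (Suc N) / fact (Suc N))) (at y)"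
      by (rule DERIV_cmult_right) (use DERIV_pow[of "Suc N" y] in simp)
    moreover have "real (Suc N) * y ^ N * (c (Suc N) / fact (Suc N)) = y ^ N / fact N * c (Suc N)"
      by (simp add: fact_Suc del: of_nat_Suc)
    ultimately show ?thesis by simp
  qed
  show ?case unfolding e using DERIV_add[OF Suc.IH d2] by simp
qed

lemma S_at0: "(\<Sum>j\<le>N. (0::real) ^ j / fact j * c j) = c 0"
  by (induction N) auto

lemma prodGs0:
  assumes "finite A"
  shows "(\<Prod>i\<in>A. Gs (k - L i) 0) = (if \<forall>i\<in>A. L i < k then 1 else 0)"
proof (cases "\<forall>i\<in>A. L i < k")
  case True
  then show ?thesis by (auto simp: Gs_at0 intro!: prod.neutral)
next
  case False
  then obtain i where "i \<in> A" "\<not> L i < k" by auto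
  then show ?thesis using False assms by (auto simp: Gs_at0 intro!: prod_zero bexI[of _ i])
qed

definition surv :: "nat pmf \<Rightarrow> nat set \<Rightarrow> nat \<Rightarrow> nat \<Rightarrow> (nat \<Rightarrow> nat) \<Rightarrow> real" where
  "surv p A k N L = measure (throws p) {\<omega> \<in> space (throws p). \<forall>i\<in>A. L i + load \<omega> N i < k}"

lemma surv_rec:
  assumes A: "finite A" "set_pmf p \<subseteq> A"
  shows "surv p A k (Suc N) L = (\<Sum>t\<in>A. pmf p t * surv p A k N (L(t := Suc (L t))))"
proof -
  have "surv p A k (Suc N) L = (\<Sum>t\<in>A. pmf p t * measure (throws p) {\<omega> \<in> space (throws p). \<forall>i\<in>A. L i + ((if t = i then 1 else 0) + load \<omega> N i) < k})"
    unfolding surv_def using throws_rec[OF A, of "\<lambda>l. \<forall>i\<in>A. L i + l i < k"] by simp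
  also have "\<dots> = (\<Sum>t\<in>A. pmf p t * surv p A k N (L(t := Suc (L t))))"
  proof -
    have eqf: "{\<omega> \<in> space (throws p). \<forall>i\<in>A. L i + ((if t = i then 1 else 0) + load \<omega> N i) < k}
       = {\<omega> \<in> space (throws p). \<forall>i\<in>A. (L(t := Suc (L t))) i + load \<omega> N i < k}" for t
      by (intro Collect_cong conj_cong refl ball_cong) auto
    show ?thesis unfolding surv_def by (simp only: eqf)
  qed
  finally show ?thesis .
qed

lemma surv_0: "surv p A k 0 L = (if \<forall>i\<in>A. L i < k then 1 else 0)"
proof -
  interpret P: prob_space "throws p" by (rule prob_space_throws)
  show ?thesis unfolding surv_def using P.prob_space by auto
qed

lemma surv_nonneg: "0 \<le> surv p A k N L" by (simp add: surv_def)

lemma egf: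
  assumes A: "finite A" "set_pmf p \<subseteq> A"
  shows "\<forall>L x. 0 \<le> x \<longrightarrow> (\<Sum>j\<le>N. x ^ j / fact j * surv p A k j L) \<le> (\<Prod>i\<in>A. Gs (k - L i) (pmf p i * x))"
proof (induction N)
  case 0
  show ?case
  proof (intro allI impI)
    fix L :: "nat \<Rightarrow> nat" and x :: real assume x: "0 \<le> x"
    define PL where "PL = (\<lambda>y. \<Prod>i\<in>A. Gs (k - L i) (pmf p i * y))"
    have d: "(PL has_real_derivative (\<Sum>t\<in>A. (pmf p t * Gs (k - L t - 1) (pmf p t * y)) * (\<Prod>i\<in>A-{t}. Gs (k - L i) (pmf p i * y)))) (at y)" for y :: real
      unfolding PL_def by (rule has_field_derivative_prod) (rule Gs_deriv_c)
    have "PL 0 \<le> PL x"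
    proof (rule DERIV_nonneg_imp_nondecreasing[OF x])
      fix y :: real assume y: "0 \<le> y"
      have "0 \<le> (\<Sum>t\<in>A. (pmf p t * Gs (k - L t - 1) (pmf p t * y)) * (\<Prod>i\<in>A-{t}. Gs (k - L i) (pmf p i * y)))"
        using y by (auto intro!: sum_nonneg mult_nonneg_nonneg prod_nonneg Gs_nonneg)
      then show "\<exists>d. (PL has_real_derivative d) (at y) \<and> 0 \<le> d"
        using d[of y] by blast
    qed
    moreover have "PL 0 = surv p A k 0 L"
      unfolding PL_def surv_0 using prodGs0[OF A(1)] by simp
    ultimately show "(\<Sum>j\<le>0. x ^ j / fact j * surv p A k j L) \<le> (\<Prod>i\<in>A. Gs (k - L i) (pmf p i * x))"
      unfolding PL_def by simp
  qed
next
  case (Suc N)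
  show ?case
  proof (intro allI impI)
    fix L :: "nat \<Rightarrow> nat" and x :: real assume x: "0 \<le> x"
    define PL where "PL = (\<lambda>L y. \<Prod>i\<in>A. Gs (k - L i) (pmf p i * y))"
    define S where "S = (\<lambda>L y. \<Sum>j\<le>N. y ^ j / fact j * surv p A k j L)"
    have d: "(PL L has_real_derivative (\<Sum>t\<in>A. pmf p t * PL (L(t := Suc (L t))) y)) (at y)" for y :: real
    proof -
      have "(PL L has_real_derivative (\<Sum>t\<in>A. (pmf p t * Gs (k - L t - 1) (pmf p t * y)) * (\<Prod>i\<in>A-{t}. Gs (k - L i) (pmf p i * y)))) (at y)"
        unfolding PL_def by (rule has_field_derivative_prod) (rule Gs_deriv_c)
      moreover have "PL (L(t := Suc (L t))) y = Gs (k - L t - 1) (pmf p t * y) * (\<Prod>i\<in>A-{t}. Gs (k - L i) (pmf p i * y))"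
        if "t \<in> A" for t
        unfolding PL_def by (subst prod.remove[OF A(1) that]) (auto intro!: prod.cong)
      ultimately show ?thesis by (simp add: mult.assoc cong: sum.cong)
    qed
    have dS: "((\<lambda>y. \<Sum>j\<le>Suc N. y ^ j / fact j * surv p A k j L) has_real_derivative (\<Sum>t\<in>A. pmf p t * S (L(t := Suc (L t))) y)) (at y)" for y :: real
    proof -
      have "((\<lambda>y. \<Sum>j\<le>Suc N. y ^ j / fact j * surv p A k j L) has_real_derivative (\<Sum>j<Suc N. y ^ j / fact j * surv p A k (Suc j) L)) (at y)"
        by (rule S_deriv)
      moreover have "(\<Sum>j<Suc N. y ^ j / fact j * surv p A k (Suc j) L) = (\<Sum>t\<in>A. pmf p t * S (L(t := Suc (L t))) y)"
        unfolding S_def surv_rec[OF A] lessThan_Suc_atMost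
        by (simp add: sum_distrib_left sum_distrib_right mult_ac sum.swap[of _ A])
      ultimately show ?thesis by simp
    qed
    define D where "D = (\<lambda>y. PL L y - (\<Sum>j\<le>Suc N. y ^ j / fact j * surv p A k j L))"
    have "D 0 \<le> D x"
    proof (rule DERIV_nonneg_imp_nondecreasing[OF x])
      fix y :: real assume y: "0 \<le> y"
      have "(D has_real_derivative (\<Sum>t\<in>A. pmf p t * PL (L(t := Suc (L t))) y) - (\<Sum>t\<in>A. pmf p t * S (L(t := Suc (L t))) y)) (at y)"
        unfolding D_def by (intro DERIV_diff d dS)
      moreover have "0 \<le> (\<Sum>t\<in>A. pmf p t * PL (L(t := Suc (L t))) y) - (\<Sum>t\<in>A. pmf p t * S (L(t := Suc (L t))) y)"
      proof -
        have "(\<Sum>t\<in>A. pmf p t * S (L(t := Suc (L t))) y) \<le> (\<Sum>t\<in>A. pmf p t * PL (L(t := Suc (L t))) y)"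
        proof (intro sum_mono mult_left_mono)
          fix t
          show "S (L(t := Suc (L t))) y \<le> PL (L(t := Suc (L t))) y"
            using Suc.IH y unfolding S_def PL_def by blast
        qed simp
        then show ?thesis by simp
      qed
      ultimately show "\<exists>d. (D has_real_derivative d) (at y) \<and> 0 \<le> d" by blast
    qed
    moreover have "D 0 = 0"
      unfolding D_def PL_def S_at0 surv_0 using prodGs0[OF A(1)] by simp
    ultimately show "(\<Sum>j\<le>Suc N. x ^ j / fact j * surv p A k j L) \<le> (\<Prod>i\<in>A. Gs (k - L i) (pmf p i * x))"
      unfolding D_def PL_def by simp
  qed
qed



lemma Gs_le_exp: "0 \<le> x \<Longrightarrow> Gs n x \<le> exp x"
proof -
  assume x: "0 \<le> x"
  have "(\<lambda>n. x ^ n /\<^sub>R fact n) sums exp x" by (rule exp_converges)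
  then have s: "summable (\<lambda>n. x ^ n / fact n)" and e: "exp x = (\<Sum>n. x ^ n / fact n)"
    by (auto simp: sums_iff divide_inverse_commute)
  have "Gs n x = sum (\<lambda>n. x ^ n / fact n) {..<n}" by (simp add: Gs_def)
  also have "\<dots> \<le> (\<Sum>n. x ^ n / fact n)"
    by (rule sum_le_suminf[OF s]) (use x in auto)
  finally show ?thesis using e by simp
qed

lemma exp_markov:
  fixes x :: real
  assumes x: "0 \<le> x"
  shows "exp x * (1 - x / (real N + 1)) \<le> (\<Sum>j\<le>N. x ^ j / fact j)"
proof -
  define f where "f = (\<lambda>n. x ^ n / fact n)"
  have "(\<lambda>n. x ^ n /\<^sub>R fact n) sums exp x" by (rule exp_converges)
  then have s: "summable f" and e: "exp x = suminf f"
    by (auto simp: sums_iff divide_inverse_commute f_def)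
  have fnn: "0 \<le> f n" for n using x by (simp add: f_def)
  have s1: "summable (\<lambda>n. f (n + Suc N))" using s by (subst summable_iff_shift)
  have s0: "summable (\<lambda>n. f (n + N))" using s by (subst summable_iff_shift)
  have split1: "suminf f = (\<Sum>n. f (n + Suc N)) + sum f {..<Suc N}"
    by (rule suminf_split_initial_segment[OF s])
  have split0: "suminf f = (\<Sum>n. f (n + N)) + sum f {..<N}"
    by (rule suminf_split_initial_segment[OF s])
  have "sum f {..<N} \<ge> 0" by (intro sum_nonneg fnn)
  then have t0: "(\<Sum>n. f (n + N)) \<le> exp x" using split0 e by linarith
  have tm: "f (n + Suc N) \<le> x / (real N + 1) * f (n + N)" for n
  proof -
    have "f (n + Suc N) = x / real (Suc (n + N)) * f (n + N)"
      by (simp add: f_def fact_Suc field_simps del: of_nat_Suc)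
    also have "\<dots> \<le> x / (real N + 1) * f (n + N)"
      using x fnn by (intro mult_right_mono divide_left_mono) auto
    finally show ?thesis .
  qed
  have "(\<Sum>n. f (n + Suc N)) \<le> (\<Sum>n. x / (real N + 1) * f (n + N))"
    by (intro suminf_le tm s1 summable_mult s0)
  also have "\<dots> = x / (real N + 1) * (\<Sum>n. f (n + N))"
    by (rule suminf_mult[OF s0])
  also have "\<dots> \<le> x / (real N + 1) * exp x"
    using t0 x by (intro mult_left_mono) auto
  finally have "(\<Sum>n. f (n + Suc N)) \<le> x / (real N + 1) * exp x" .
  then have "exp x - x / (real N + 1) * exp x \<le> sum f {..<Suc N}"
    using split1 e by linarith
  then show ?thesis by (simp add: f_def lessThan_Suc_atMost algebra_simps)
qed

lemma exp_ge_quad: "0 \<le> (x::real) \<Longrightarrow> 1 + x + x^2/2 \<le> exp x"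
  using Gs_le_exp[of x 3] by (simp add: Gs_def eval_nat_numeral)

lemma exp2_ge7: "7 \<le> exp (2::real)"
  using Gs_le_exp[of 2 5] by (simp add: Gs_def eval_nat_numeral fact_numeral)



lemma Gs_ge1: "0 \<le> u \<Longrightarrow> 1 \<le> Gs (Suc k) u"
proof (induction k)
  case 0 then show ?case by (simp add: Gs_def)
next
  case (Suc k)
  have "0 \<le> u ^ Suc k / fact (Suc k)" using Suc.prems by simp
  then show ?case using Suc unfolding Gs_Suc[of "Suc k"] by linarith
qed

lemma mono_deriv: "((\<lambda>y. y ^ Suc k / fact (Suc k)) has_real_derivative y ^ k / fact k) (at y)"
proof -
  have "((\<lambda>y. y ^ Suc k * (1 / fact (Suc k))) has_real_derivative real (Suc k) * y ^ k * (1 / fact (Suc k))) (at y)"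
    by (rule DERIV_cmult_right) (use DERIV_pow[of "Suc k" y] in simp)
  moreover have "real (Suc k) * y ^ k * (1 / fact (Suc k)) = y ^ k / fact k"
    by (simp add: fact_Suc del: of_nat_Suc)
  ultimately show ?thesis by simp
qed

lemma ln_Gs_deriv:
  assumes "0 \<le> y"
  shows "((\<lambda>y. ln (Gs (Suc k) y)) has_real_derivative Gs k y / Gs (Suc k) y) (at y)"
proof -
  have g: "0 < Gs (Suc k) y" using Gs_ge1[OF assms, of k] by simp
  have dg: "(Gs (Suc k) has_real_derivative Gs k y) (at y)" using Gs_deriv[of "Suc k" y] by simp
  have "((\<lambda>y. ln (Gs (Suc k) y)) has_real_derivative 1 / Gs (Suc k) y * Gs k y) (at y)"
    by (rule DERIV_chain2[OF DERIV_ln_divide[OF g] dg])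
  then show ?thesis by simp
qed

lemma D_nonneg:
  assumes u: "0 \<le> u"
  shows "(u ^ Suc k / fact (Suc k)) / Gs (Suc k) u \<le> u - ln (Gs (Suc k) u)"
proof -
  define D where "D = (\<lambda>y. y - ln (Gs (Suc k) y) - (y ^ Suc k / fact (Suc k)) / Gs (Suc k) y)"
  have "D 0 \<le> D u"
  proof (rule DERIV_nonneg_imp_nondecreasing[OF u])
    fix y :: real assume y: "0 \<le> y"
    define g where "g = Gs (Suc k) y"
    define g1 where "g1 = Gs k y"
    define m where "m = y ^ Suc k / fact (Suc k)"
    define m1 where "m1 = y ^ k / fact k"
    have gpos: "1 \<le> g" unfolding g_def by (rule Gs_ge1[OF y])
    have grel: "g = g1 + m1" unfolding g_def g1_def m1_def by (simp add: Gs_Suc)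
    have dg: "(Gs (Suc k) has_real_derivative g1) (at y)"
      unfolding g1_def using Gs_deriv[of "Suc k" y] by simp
    have dD: "(D has_real_derivative (1 - g1 / g - (m1 * g - m * g1) / (g * g))) (at y)"
    proof -
      have d1: "((\<lambda>y. y - ln (Gs (Suc k) y)) has_real_derivative 1 - g1 / g) (at y)"
        unfolding g_def g1_def by (intro DERIV_diff DERIV_ident ln_Gs_deriv[OF y])
      have d2: "((\<lambda>y. (y ^ Suc k / fact (Suc k)) / Gs (Suc k) y) has_real_derivative (m1 * g - m * g1) / (g * g)) (at y)"
        unfolding g_def m_def m1_def using gpos unfolding g_def by (intro DERIV_divide mono_deriv dg) auto
      show ?thesis unfolding D_def by (rule DERIV_diff[OF d1 d2])
    qed
    have "1 - g1 / g - (m1 * g - m * g1) / (g * g) = m * g1 / (g * g)"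
    proof -
      have g1rel: "g1 = g - m1" using grel by simp
      have "g \<noteq> 0" using gpos by simp
      then show ?thesis unfolding g1rel by (simp add: field_simps)
    qed
    moreover have "0 \<le> m * g1 / (g * g)"
      unfolding m_def g1_def using y gpos by (auto intro!: divide_nonneg_nonneg mult_nonneg_nonneg Gs_nonneg)
    ultimately show "\<exists>d. (D has_real_derivative d) (at y) \<and> 0 \<le> d" using dD by auto
  qed
  moreover have "D 0 = 0" by (simp add: D_def Gs_at0)
  ultimately show ?thesis by (simp add: D_def)
qed

lemma ratio_mono:
  assumes a: "0 < a" and ab: "a \<le> b"
  shows "(b - ln (Gs (Suc k) b)) * a ^ Suc k \<le> (a - ln (Gs (Suc k) a)) * b ^ Suc k"
proof -
  define \<rho> where "\<rho> = (\<lambda>y. (y - ln (Gs (Suc k) y)) / y ^ Suc k)"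
  have "\<rho> b \<le> \<rho> a"
  proof (rule DERIV_nonpos_imp_nonincreasing[OF ab])
    fix y :: real assume y1: "a \<le> y" and y2: "y \<le> b"
    have y: "0 < y" using a y1 by simp
    define g where "g = Gs (Suc k) y"
    define g1 where "g1 = Gs k y"
    define m where "m = y ^ Suc k / fact (Suc k)"
    define m1 where "m1 = y ^ k / fact k"
    define \<phi> where "\<phi> = y - ln g"
    have gpos: "1 \<le> g" unfolding g_def by (rule Gs_ge1) (use y in simp)
    have grel: "g = g1 + m1" unfolding g_def g1_def m1_def by (simp add: Gs_Suc)
    have d1: "((\<lambda>y. y - ln (Gs (Suc k) y)) has_real_derivative 1 - g1 / g) (at y)"
      unfolding g_def g1_def by (intro DERIV_diff DERIV_ident ln_Gs_deriv) (use y in simp)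
    have d2: "((\<lambda>y. y ^ Suc k) has_real_derivative real (Suc k) * y ^ k) (at y)"
      using DERIV_pow[of "Suc k" y] by simp
    have dr: "(\<rho> has_real_derivative ((1 - g1 / g) * y ^ Suc k - (y - ln (Gs (Suc k) y)) * (real (Suc k) * y ^ k)) / (y ^ Suc k * y ^ Suc k)) (at y)"
      unfolding \<rho>_def using y by (intro DERIV_divide d1 d2) auto
    have Dn: "m / g \<le> \<phi>"
      using D_nonneg[of y k] y unfolding m_def g_def \<phi>_def by simp
    have eq: "(1 - g1 / g) * y ^ Suc k - \<phi> * (real (Suc k) * y ^ k) = y ^ k * real (Suc k) * (m / g - \<phi>)"
    proof -
      have g1rel: "g1 = g - m1" using grel by simp
      have "g \<noteq> 0" using gpos by simp
      then show ?thesis unfolding g1rel m_def m1_def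
        by (simp add: field_simps fact_Suc del: of_nat_Suc)
    qed
    have "y ^ k * real (Suc k) * (m / g - \<phi>) \<le> 0"
      using Dn y by (intro mult_nonneg_nonpos) auto
    then have "((1 - g1 / g) * y ^ Suc k - (y - ln (Gs (Suc k) y)) * (real (Suc k) * y ^ k)) / (y ^ Suc k * y ^ Suc k) \<le> 0"
      using eq y unfolding \<phi>_def g_def by (intro divide_nonpos_nonneg) auto
    then show "\<exists>d. (\<rho> has_real_derivative d) (at y) \<and> d \<le> 0" using dr by blast
  qed
  then show ?thesis unfolding \<rho>_def using a ab
    by (simp add: divide_le_eq le_divide_eq mult.commute mult.left_commute) 
qed

lemma K1:
  assumes A: "finite A" and u: "\<forall>i\<in>A. 0 \<le> u i" and U: "0 \<le> U"
    and UU: "U ^ Suc k = (\<Sum>i\<in>A. u i ^ Suc k)"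
  shows "(\<Prod>i\<in>A. exp (- u i) * Gs (Suc k) (u i)) \<le> exp (- U) * Gs (Suc k) U"
proof -
  define \<phi> where "\<phi> = (\<lambda>y. y - ln (Gs (Suc k) y))"
  have ex: "exp (- y) * Gs (Suc k) y = exp (- \<phi> y)" if "0 \<le> y" for y
  proof -
    have "0 < Gs (Suc k) y" using Gs_ge1[OF that, of k] by simp
    then show ?thesis by (simp add: \<phi>_def exp_diff exp_minus field_simps)
  qed
  have ule: "u i \<le> U" if "i \<in> A" for i
  proof -
    have "u i ^ Suc k \<le> (\<Sum>i\<in>A. u i ^ Suc k)"
      by (rule member_le_sum) (use that A u in auto)
    then have "u i ^ Suc k \<le> U ^ Suc k" using UU by simp
    then show ?thesis using U by (rule power_le_imp_le_base)
  qed
  have main: "\<phi> U \<le> (\<Sum>i\<in>A. \<phi> (u i))"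
  proof (cases "U = 0")
    case True
    then have "u i = 0" if "i \<in> A" for i using ule[OF that] u that by force
    then show ?thesis using True by (simp add: \<phi>_def Gs_at0)
  next
    case False
    then have Upos: "0 < U" using U by simp
    have each: "\<phi> U * u i ^ Suc k \<le> \<phi> (u i) * U ^ Suc k" if "i \<in> A" for i
    proof (cases "u i = 0")
      case True
      then show ?thesis using U by (simp add: \<phi>_def Gs_at0)
    next
      case False
      then have "0 < u i" using u that by force
      then show ?thesis unfolding \<phi>_def by (rule ratio_mono) (rule ule[OF that])
    qed
    have "\<phi> U * U ^ Suc k = (\<Sum>i\<in>A. \<phi> U * u i ^ Suc k)"
      unfolding UU by (rule sum_distrib_left)
    also have "\<dots> \<le> (\<Sum>i\<in>A. \<phi> (u i) * U ^ Suc k)"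
      by (rule sum_mono) (rule each)
    also have "\<dots> = (\<Sum>i\<in>A. \<phi> (u i)) * U ^ Suc k"
      by (simp add: sum_distrib_right)
    finally show ?thesis using Upos by simp
  qed
  have "(\<Prod>i\<in>A. exp (- u i) * Gs (Suc k) (u i)) = (\<Prod>i\<in>A. exp (- \<phi> (u i)))"
    using u by (intro prod.cong refl ex) auto
  also have "\<dots> = exp (- (\<Sum>i\<in>A. \<phi> (u i)))"
    by (simp add: exp_sum[OF A] sum_negf[symmetric])
  also have "\<dots> \<le> exp (- \<phi> U)"
    using main by simp
  also have "\<dots> = exp (- U) * Gs (Suc k) U"
    using ex[OF U] by simp
  finally show ?thesis .
qed

lemma Gs_le4: "0 \<le> u \<Longrightarrow> Gs (Suc k) u \<le> 4 ^ k * exp (u / 4)"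
proof -
  assume u: "0 \<le> u"
  have "Gs (Suc k) u = (\<Sum>j<Suc k. 4 ^ j * ((u / 4) ^ j / fact j))"
    unfolding Gs_def by (intro sum.cong refl) (simp add: power_divide)
  also have "\<dots> \<le> (\<Sum>j<Suc k. 4 ^ k * ((u / 4) ^ j / fact j))"
    using u by (intro sum_mono mult_right_mono power_increasing) auto
  also have "\<dots> = 4 ^ k * Gs (Suc k) (u / 4)"
    unfolding Gs_def by (simp add: sum_distrib_left del: sum.lessThan_Suc)
  also have "\<dots> \<le> 4 ^ k * exp (u / 4)"
    using u by (intro mult_left_mono Gs_le_exp) auto
  finally show ?thesis .
qed

lemma K2:
  assumes k: "1 \<le> k" and R: "21 / 4 \<le> R"
  shows "4 * exp (- (real k * R)) * Gs k (real k * R) \<le> exp (- (2 * R / 3))"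
proof (cases "k = 1")
  case True
  have "4 \<le> exp (R / 3)"
  proof -
    have "1 + R / 3 + (R / 3) ^ 2 / 2 \<le> exp (R / 3)" by (rule exp_ge_quad) (use R in simp)
    moreover have "4 \<le> 1 + R / 3 + (R / 3) ^ 2 / 2"
    proof -
      have h1: "7 / 4 \<le> R / 3" using R by simp
      have h: "49/16 \<le> (R / 3) ^ 2" using power_mono[OF h1, of 2] by (simp add: power2_eq_square)
      then show ?thesis using h1 by linarith
    qed
    ultimately show ?thesis by linarith
  qed
  then have "4 * exp (- R) \<le> exp (R / 3) * exp (- R)" by simp
  also have "exp (R / 3) * exp (- R) = exp (- (2 * R / 3))" by (simp add: exp_add[symmetric])
  finally show ?thesis using True by (simp add: Gs_def)
next
  case False
  with k obtain k' where kk: "k = Suc k'" and k2: "1 \<le> k'" by (cases k) auto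
  have "4 \<le> exp (5 * R / 12)"
  proof -
    have "1 + 5 * R / 12 + (5 * R / 12) ^ 2 / 2 \<le> exp (5 * R / 12)" by (rule exp_ge_quad) (use R in simp)
    moreover have "4 \<le> 1 + 5 * R / 12 + (5 * R / 12) ^ 2 / 2"
    proof -
      have h1: "2 \<le> 5 * R / 12" using R by simp
      have h: "4 \<le> (5 * R / 12) ^ 2" using power_mono[OF h1, of 2] by (simp add: power2_eq_square)
      then show ?thesis using h1 by linarith
    qed
    ultimately show ?thesis by linarith
  qed
  then have p4: "4 ^ k \<le> exp (5 * R / 12) ^ k" by (rule power_mono) simp
  have kR: "0 \<le> real k * R" using R by simp
  have "4 * exp (- (real k * R)) * Gs k (real k * R) \<le> 4 * exp (- (real k * R)) * (4 ^ k' * exp (real k * R / 4))"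
    using Gs_le4[OF kR, of k'] kk by (intro mult_left_mono) auto
  also have "\<dots> = 4 ^ k * exp (- (3 * real k * R / 4))"
    by (simp add: kk exp_add[symmetric] field_simps)
  also have "\<dots> \<le> exp (5 * R / 12) ^ k * exp (- (3 * real k * R / 4))"
    using p4 by (intro mult_right_mono) auto
  also have "\<dots> = exp (- (real k * R / 3))"
    by (simp add: exp_of_nat_mult[symmetric] exp_add[symmetric] field_simps)
  also have "\<dots> \<le> exp (- (2 * R / 3))"
    using kk k2 R by (simp add: field_simps)
  finally show ?thesis .
qed



lemma INF_enat_Least:
  assumes "S \<noteq> {}"
  shows "(INF n\<in>S. enat n) = enat (LEAST n. n \<in> S)"
proof (rule antisym)
  obtain n0 where "n0 \<in> S" using assms by auto
  then have "(LEAST n. n \<in> S) \<in> S" by (rule LeastI)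
  then show "(INF n\<in>S. enat n) \<le> enat (LEAST n. n \<in> S)" by (rule INF_lower)
next
  show "enat (LEAST n. n \<in> S) \<le> (INF n\<in>S. enat n)"
    by (rule INF_greatest) (simp add: Least_le)
qed

lemma hit_iff:
  assumes a: "0 \<le> a"
  shows "(\<exists>n. hit_time k \<omega> = enat n \<and> real n \<le> a) \<longleftrightarrow> (\<exists>i. k \<le> load \<omega> (nat \<lfloor>a\<rfloor>) i)"
proof -
  define S where "S = {n. \<exists>i. k \<le> load \<omega> n i}"
  have ht: "hit_time k \<omega> = (INF n\<in>S. enat n)" by (simp add: hit_time_def S_def)
  show ?thesis
  proof
    assume "\<exists>n. hit_time k \<omega> = enat n \<and> real n \<le> a"
    then obtain n where n: "hit_time k \<omega> = enat n" "real n \<le> a" by auto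
    have Sne: "S \<noteq> {}"
    proof
      assume "S = {}"
      then have "hit_time k \<omega> = \<infinity>" by (simp add: ht top_enat_def)
      then show False using n by simp
    qed
    then have "n = (LEAST n. n \<in> S)" using n ht INF_enat_Least[OF Sne] by simp
    then have "n \<in> S" using Sne by (metis LeastI ex_in_conv)
    then obtain i where i: "k \<le> load \<omega> n i" by (auto simp: S_def)
    have "n \<le> nat \<lfloor>a\<rfloor>" using n(2) by (simp add: le_nat_floor)
    then have "load \<omega> n i \<le> load \<omega> (nat \<lfloor>a\<rfloor>) i" by (rule load_mono)
    with i show "\<exists>i. k \<le> load \<omega> (nat \<lfloor>a\<rfloor>) i" by (intro exI[of _ i]) simp
  next
    assume "\<exists>i. k \<le> load \<omega> (nat \<lfloor>a\<rfloor>) i"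
    then have N: "nat \<lfloor>a\<rfloor> \<in> S" by (simp add: S_def)
    then have Sne: "S \<noteq> {}" by auto
    have "(LEAST n. n \<in> S) \<le> nat \<lfloor>a\<rfloor>" using N by (rule Least_le)
    moreover have "real (nat \<lfloor>a\<rfloor>) \<le> a" using a by linarith
    ultimately have "real (LEAST n. n \<in> S) \<le> a" by linarith
    then show "\<exists>n. hit_time k \<omega> = enat n \<and> real n \<le> a"
      using ht INF_enat_Least[OF Sne] by auto
  qed
qed

lemma kk_fact: "real k ^ k / fact k \<le> exp (real k)"
proof -
  have "real k ^ k / fact k \<le> (\<Sum>j<Suc k. real k ^ j / fact j)"
    by (rule member_le_sum[of k "{..<Suc k}" "\<lambda>j. real k ^ j / fact j"]) auto
  also have "\<dots> \<le> exp (real k)" using Gs_le_exp[of "real k" "Suc k"] by (simp add: Gs_def)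
  finally show ?thesis .
qed


theorem corollary5:
  fixes m k :: nat and p :: "nat pmf" and \<delta> :: real
  assumes "m \<ge> 2" and "set_pmf p \<subseteq> {1..m}" and "k \<ge> 1"
    and "0 < \<delta>" and "\<delta> < 1"
  defines "nstar \<equiv> real k / (\<Sum>i=1..m. pmf p i ^ k) powr (1 / real k)"
  shows "measure (throws p) {\<omega> \<in> space (throws p).
            \<exists>n. hit_time k \<omega> = enat n \<and> real n \<le> (\<delta> / exp 1) * nstar} \<le> \<delta> \<and>
         measure (throws p) {\<omega> \<in> space (throws p).
            \<exists>n. hit_time k \<omega> = enat n \<and> real n \<le> max (exp 2) (2 * ln (1 / \<delta>)) * nstar}
           \<ge> 1 - \<delta>"
proof -
  define A where "A = {1..m}"
  have A: "finite A" "set_pmf p \<subseteq> A" using assms(2) by (auto simp: A_def)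
  have k: "1 \<le> k" using assms(3) .
  have d0: "0 < \<delta>" and d1: "\<delta> < 1" using assms(4,5) by auto
  interpret P: prob_space "throws p" by (rule prob_space_throws)
  define s where "s = (\<Sum>i\<in>A. pmf p i ^ k)"
  have s_pos: "0 < s"
  proof -
    have "(\<Sum>i\<in>A. pmf p i) = 1" by (rule sum_pmf_eq_1[OF A])
    then obtain i where i: "i \<in> A" "pmf p i \<noteq> 0" by (metis sum.neutral zero_neq_one)
    then have "0 < pmf p i ^ k" by (simp add: pmf_nonneg order.not_eq_order_implies_strict)
    also have "\<dots> \<le> s" unfolding s_def by (rule member_le_sum) (use i A in auto)
    finally show ?thesis .
  qed
  define \<sigma> where "\<sigma> = s powr (1 / real k)"
  have \<sigma>_pos: "0 < \<sigma>" using s_pos by (simp add: \<sigma>_def)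
  have \<sigma>k: "\<sigma> ^ k = s"
    using s_pos k by (simp add: \<sigma>_def powr_realpow[symmetric] powr_powr)
  have ns: "nstar = real k / \<sigma>" by (simp add: nstar_def \<sigma>_def s_def A_def)
  have ns_pos: "0 < nstar" using k \<sigma>_pos by (simp add: ns)
  have part1: "measure (throws p) {\<omega> \<in> space (throws p).
            \<exists>n. hit_time k \<omega> = enat n \<and> real n \<le> (\<delta> / exp 1) * nstar} \<le> \<delta>"
  proof -
    define a where "a = (\<delta> / exp 1) * nstar"
    have a0: "0 \<le> a" using d0 ns_pos by (simp add: a_def)
    define N where "N = nat \<lfloor>a\<rfloor>"
    have Na: "real N \<le> a" using a0 by (simp add: N_def)
    have eq: "{\<omega> \<in> space (throws p). \<exists>n. hit_time k \<omega> = enat n \<and> real n \<le> (\<delta> / exp 1) * nstar}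
        = {\<omega> \<in> space (throws p). \<exists>i. k \<le> load \<omega> N i}"
    proof (intro Collect_cong conj_cong refl)
      fix \<omega> show "(\<exists>n. hit_time k \<omega> = enat n \<and> real n \<le> \<delta> / exp 1 * nstar) = (\<exists>i. k \<le> load \<omega> N i)"
        using hit_iff[OF a0, of k \<omega>] unfolding a_def N_def .
    qed
    have "measure (throws p) {\<omega> \<in> space (throws p). \<exists>i. k \<le> load \<omega> N i}
        \<le> (\<Sum>i\<in>A. real N ^ k / fact k * pmf p i ^ k)"
      using union_bound[OF A k, of N, THEN spec[of _ "\<lambda>_. 0"]] by simp
    also have "\<dots> = real N ^ k / fact k * s"
      by (simp add: s_def sum_distrib_left)
    also have "\<dots> = (real N / real k) ^ k * (real k ^ k / fact k) * s"
      using k by (simp add: power_divide)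
    also have "\<dots> \<le> (real N / real k) ^ k * exp (real k) * s"
      using s_pos by (intro mult_right_mono mult_left_mono kk_fact) auto
    also have "\<dots> = (exp 1 * real N * \<sigma> / real k) ^ k"
      by (simp add: power_mult_distrib \<sigma>k exp_of_nat_mult[symmetric] power_divide field_simps)
    also have "\<dots> \<le> \<delta> ^ k"
    proof (rule power_mono)
      have "exp 1 * real N * \<sigma> / real k = exp 1 * real N / nstar" by (simp add: ns)
      also have "\<dots> \<le> exp 1 * a / nstar"
        using Na ns_pos by (intro divide_right_mono mult_left_mono) auto
      also have "\<dots> = \<delta>" using ns_pos by (simp add: a_def)
      finally show "exp 1 * real N * \<sigma> / real k \<le> \<delta>" .
    qed (use \<sigma>_pos in auto)
    also have "\<dots> \<le> \<delta> ^ 1" using d0 d1 k by (intro power_decreasing) auto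
    finally show ?thesis using eq by simp
  qed
  have part2: "measure (throws p) {\<omega> \<in> space (throws p).
            \<exists>n. hit_time k \<omega> = enat n \<and> real n \<le> max (exp 2) (2 * ln (1 / \<delta>)) * nstar} \<ge> 1 - \<delta>"
  proof -
    define c where "c = max (exp 2) (2 * ln (1 / \<delta>))"
    have c7: "7 \<le> c" using exp2_ge7 by (simp add: c_def)
    have cl: "2 * ln (1 / \<delta>) \<le> c" by (simp add: c_def)
    define a where "a = c * nstar"
    have a0: "0 \<le> a" using c7 ns_pos by (simp add: a_def)
    define N where "N = nat \<lfloor>a\<rfloor>"
    have Na: "a \<le> real N + 1" using a0 unfolding N_def by linarith
    define x where "x = 3 * (real N + 1) / 4"
    have x0: "0 \<le> x" by (simp add: x_def)
    define F where "F = surv p A k N (\<lambda>_. 0)"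
    have F0: "0 \<le> F" by (simp add: F_def surv_nonneg)
    have Fmono: "F \<le> surv p A k j (\<lambda>_. 0)" if "j \<le> N" for j
      unfolding F_def surv_def
    proof (rule P.finite_measure_mono)
      show "{\<omega> \<in> space (throws p). \<forall>i\<in>A. 0 + load \<omega> N i < k} \<subseteq> {\<omega> \<in> space (throws p). \<forall>i\<in>A. 0 + load \<omega> j i < k}"
        using load_mono[OF that] by (auto intro: le_less_trans)
      show "{\<omega> \<in> space (throws p). \<forall>i\<in>A. 0 + load \<omega> j i < k} \<in> sets (throws p)"
        by (rule sets_load)
    qed
    have "F * (exp x / 4) \<le> F * (\<Sum>j\<le>N. x ^ j / fact j)"
    proof (rule mult_left_mono[OF _ F0])
      have "exp x * (1 - x / (real N + 1)) \<le> (\<Sum>j\<le>N. x ^ j / fact j)" by (rule exp_markov[OF x0])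
      moreover have "exp x * (1 - x / (real N + 1)) = exp x / 4" by (simp add: x_def field_simps)
      ultimately show "exp x / 4 \<le> (\<Sum>j\<le>N. x ^ j / fact j)" by simp
    qed
    also have "\<dots> = (\<Sum>j\<le>N. x ^ j / fact j * F)" by (simp add: sum_distrib_left mult.commute)
    also have "\<dots> \<le> (\<Sum>j\<le>N. x ^ j / fact j * surv p A k j (\<lambda>_. 0))"
      using x0 by (intro sum_mono mult_left_mono Fmono) auto
    also have "\<dots> \<le> (\<Prod>i\<in>A. Gs (k - (\<lambda>_. 0) i) (pmf p i * x))"
      using egf[OF A, of k N] x0 by blast
    also have "\<dots> = (\<Prod>i\<in>A. Gs k (pmf p i * x))" by simp
    also have "\<dots> = exp x * (\<Prod>i\<in>A. exp (- (pmf p i * x)) * Gs k (pmf p i * x))"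
    proof -
      have "(\<Prod>i\<in>A. exp (- (pmf p i * x))) = exp (- x)"
        using sum_pmf_eq_1[OF A] by (simp add: exp_sum[OF A(1), symmetric] sum_negf sum_distrib_right[symmetric])
      then have "exp x * (\<Prod>i\<in>A. exp (- (pmf p i * x)) * Gs k (pmf p i * x))
          = exp x * (exp (- x) * (\<Prod>i\<in>A. Gs k (pmf p i * x)))"
        by (simp only: prod.distrib)
      also have "\<dots> = (\<Prod>i\<in>A. Gs k (pmf p i * x))"
        by (simp only: mult.assoc[symmetric] exp_minus_inverse mult_1_left)
      finally show ?thesis by simp
    qed
    finally have Fb: "F * (exp x / 4) \<le> exp x * (\<Prod>i\<in>A. exp (- (pmf p i * x)) * Gs k (pmf p i * x))" .
    obtain k' where kk: "k = Suc k'" using k by (cases k) auto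
    define U where "U = x * \<sigma>"
    have U0: "0 \<le> U" using x0 \<sigma>_pos by (simp add: U_def)
    have UU: "U ^ Suc k' = (\<Sum>i\<in>A. (pmf p i * x) ^ Suc k')"
    proof -
      have "U ^ Suc k' = x ^ Suc k' * \<sigma> ^ Suc k'" by (simp add: U_def power_mult_distrib)
      also have "\<dots> = x ^ Suc k' * s" using \<sigma>k kk by simp
      also have "\<dots> = (\<Sum>i\<in>A. (pmf p i * x) ^ Suc k')"
        unfolding s_def kk sum_distrib_left by (intro sum.cong refl) (simp add: power_mult_distrib mult_ac)
      finally show ?thesis .
    qed
    have K: "(\<Prod>i\<in>A. exp (- (pmf p i * x)) * Gs k (pmf p i * x)) \<le> exp (- U) * Gs k U"
      unfolding kk by (rule K1[OF A(1) _ U0 UU]) (use x0 in auto)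
    have F1: "F \<le> 4 * exp (- U) * Gs k U"
    proof -
      have "F * (exp x / 4) \<le> exp x * (exp (- U) * Gs k U)"
        using Fb K by (meson exp_ge_zero mult_left_mono order_trans)
      then show ?thesis by (simp add: field_simps)
    qed
    define R where "R = x / nstar"
    have UR: "U = real k * R" using \<sigma>_pos k by (simp add: U_def R_def ns)
    have R1: "3 * c / 4 \<le> R"
    proof -
      have "c * nstar \<le> real N + 1" using Na by (simp add: a_def)
      then have "c \<le> (real N + 1) / nstar" using ns_pos by (simp add: le_divide_eq)
      moreover have "R = 3 / 4 * ((real N + 1) / nstar)" unfolding R_def x_def by simp
      ultimately show ?thesis by linarith
    qed
    have R2: "21 / 4 \<le> R" using R1 c7 by linarith
    have "F \<le> exp (- (2 * R / 3))"
      using F1 K2[OF k R2] unfolding UR by simp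
    also have "\<dots> \<le> exp (- ln (1 / \<delta>))"
      using R1 cl by simp
    also have "\<dots> = \<delta>" using d0 by (simp add: ln_div)
    finally have Fd: "F \<le> \<delta>" .
    have eq: "{\<omega> \<in> space (throws p). \<exists>n. hit_time k \<omega> = enat n \<and> real n \<le> max (exp 2) (2 * ln (1 / \<delta>)) * nstar}
        = {\<omega> \<in> space (throws p). \<exists>i. k \<le> load \<omega> N i}"
    proof (intro Collect_cong conj_cong refl)
      fix \<omega> show "(\<exists>n. hit_time k \<omega> = enat n \<and> real n \<le> max (exp 2) (2 * ln (1 / \<delta>)) * nstar) = (\<exists>i. k \<le> load \<omega> N i)"
        using hit_iff[OF a0, of k \<omega>] unfolding a_def N_def c_def .
    qed
    have sub: "space (throws p) - {\<omega> \<in> space (throws p). \<forall>i\<in>A. 0 + load \<omega> N i < k}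
        \<subseteq> {\<omega> \<in> space (throws p). \<exists>i. k \<le> load \<omega> N i}"
      by (auto simp: not_less)
    have "1 - \<delta> \<le> 1 - F" using Fd by simp
    also have "1 - F = measure (throws p) (space (throws p) - {\<omega> \<in> space (throws p). \<forall>i\<in>A. 0 + load \<omega> N i < k})"
      unfolding F_def surv_def by (rule P.prob_compl[symmetric]) (rule sets_load)
    also have "\<dots> \<le> measure (throws p) {\<omega> \<in> space (throws p). \<exists>i. k \<le> load \<omega> N i}"
      by (rule P.finite_measure_mono[OF sub]) (rule sets_load[where Q="\<lambda>l. \<exists>i. k \<le> l i"])
    finally show ?thesis using eq by simp
  qed
  show ?thesis using part1 part2 by blast
qed

end
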